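(* Let $G$ be a finite simple graph with $n$ vertices and minimum degree $\delta$ satisfying $230 \le \delta \le 1{,}000$. Then $$\gamma_s(G) \le \frac{\sqrt{\ln(\delta+1)\,(18.16 - 1.4\ln\delta)} + 0.25}{\sqrt{\delta+1}}\, n.$$
   Context: For a vertex $v$ of $G$, $N[v]$ denotes the closed neighbourhood of $v$ (i.e. $v$ together with its neighbours). A signed domination function of $G$ is a function $f: V(G) \to \{-1, 1\}$ such that $\sum_{x \in N[v]} f(x) \ge 1$ for every vertex $v \in V(G)$. The weight of $f$ is $f(V(G)) = \sum_{v \in V(G)} f(v)$. The signed domination number $\gamma_s(G)$ is the minimum weight of a signed domination function of $G$. *)

theory Defs
  imports Complex_Main
begin

definition simple_graph :: "'a set \<Rightarrow> ('a \<Rightarrow> 'a \<Rightarrow> bool) \<Rightarrow> bool" where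
  "simple_graph V E \<longleftrightarrow> finite V \<and>
     (\<forall>u v. E u v \<longrightarrow> u \<in> V \<and> v \<in> V) \<and>
     (\<forall>u v. E u v \<longrightarrow> E v u) \<and> (\<forall>v. \<not> E v v)"

definition neighbours :: "'a set \<Rightarrow> ('a \<Rightarrow> 'a \<Rightarrow> bool) \<Rightarrow> 'a \<Rightarrow> 'a set" where
  "neighbours V E v = {u \<in> V. E v u}"

definition closed_nbhd :: "'a set \<Rightarrow> ('a \<Rightarrow> 'a \<Rightarrow> bool) \<Rightarrow> 'a \<Rightarrow> 'a set" where
  "closed_nbhd V E v = insert v (neighbours V E v)"

definition degree :: "'a set \<Rightarrow> ('a \<Rightarrow> 'a \<Rightarrow> bool) \<Rightarrow> 'a \<Rightarrow> nat" where
  "degree V E v = card (neighbours V E v)"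

definition min_degree :: "'a set \<Rightarrow> ('a \<Rightarrow> 'a \<Rightarrow> bool) \<Rightarrow> nat" where
  "min_degree V E = Min (degree V E ` V)"

definition signed_dom_fun :: "'a set \<Rightarrow> ('a \<Rightarrow> 'a \<Rightarrow> bool) \<Rightarrow> ('a \<Rightarrow> int) \<Rightarrow> bool" where
  "signed_dom_fun V E f \<longleftrightarrow> (\<forall>v\<in>V. f v \<in> {-1, 1}) \<and>
     (\<forall>v\<in>V. (\<Sum>x\<in>closed_nbhd V E v. f x) \<ge> 1)"

definition signed_dom_number :: "'a set \<Rightarrow> ('a \<Rightarrow> 'a \<Rightarrow> bool) \<Rightarrow> int" where
  "signed_dom_number V E = Min {(\<Sum>v\<in>V. f v) | f. signed_dom_fun V E f}"

end

theory Submission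
  imports Defs "HOL-Probability.Hoeffding"
begin

lemma sum_pm1:
  assumes "finite A" "\<forall>x\<in>A. g x \<in> {-1, 1::int}"
  shows "(\<Sum>x\<in>A. g x) = int (card A) - 2 * int (card {x\<in>A. g x = -1})"
proof -
  have "(\<Sum>x\<in>A. g x) = (\<Sum>x\<in>A. 1 - 2 * (if g x = -1 then 1 else 0))"
    using assms(2) by (intro sum.cong) auto
  also have "\<dots> = int (card A) - 2 * (\<Sum>x\<in>A. (if g x = -1 then 1 else 0))"
    by (simp add: sum_subtractf sum_distrib_left)
  also have "(\<Sum>x\<in>A. (if g x = -1 then 1 else 0::int)) = int (card {x\<in>A. g x = -1})"
    using assms(1) by (simp add: sum.If_cases Int_def conj_commute)
  finally show ?thesis .
qed

lemma closed_nbhd_sub: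
  assumes "simple_graph V E" "v \<in> V"
  shows "closed_nbhd V E v \<subseteq> V" "finite (closed_nbhd V E v)"
    "card (closed_nbhd V E v) = Defs.degree V E v + 1"
proof -
  show s: "closed_nbhd V E v \<subseteq> V" using assms
    unfolding closed_nbhd_def neighbours_def by auto
  show "finite (closed_nbhd V E v)"
    using s assms(1) unfolding simple_graph_def by (meson finite_subset)
  have "v \<notin> neighbours V E v" using assms(1) unfolding simple_graph_def neighbours_def by auto
  moreover have "finite (neighbours V E v)" using assms(1)
    unfolding simple_graph_def neighbours_def by auto
  ultimately show "card (closed_nbhd V E v) = Defs.degree V E v + 1"
    unfolding closed_nbhd_def Defs.degree_def by simp
qed

lemma sdn_le:
  assumes "simple_graph V E" "signed_dom_fun V E g"
  shows "signed_dom_number V E \<le> (\<Sum>v\<in>V. g v)"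
proof -
  have fin: "finite V" using assms(1) unfolding simple_graph_def by auto
  let ?S = "{(\<Sum>v\<in>V. f v) | f. signed_dom_fun V E f}"
  have "?S \<subseteq> {- int (card V) .. int (card V)}"
  proof
    fix s assume "s \<in> ?S"
    then obtain f where f: "signed_dom_fun V E f" "s = (\<Sum>v\<in>V. f v)" by auto
    have "\<forall>x\<in>V. f x \<in> {-1,1}" using f(1) unfolding signed_dom_fun_def by auto
    from sum_pm1[OF fin this] f(2) have "s = int (card V) - 2 * int (card {x\<in>V. f x = -1})" by simp
    moreover have "card {x\<in>V. f x = -1} \<le> card V" using fin by (intro card_mono) auto
    ultimately show "s \<in> {- int (card V) .. int (card V)}" by auto
  qed
  hence "finite ?S" by (rule finite_subset) simp
  moreover have "(\<Sum>v\<in>V. g v) \<in> ?S" using assms(2) by auto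
  ultimately show ?thesis unfolding signed_dom_number_def by (rule Min_le)
qed


lemma sdn_comb:
  fixes f :: "'a \<Rightarrow> bool"
  assumes G: "simple_graph V E"
  shows "real_of_int (signed_dom_number V E) \<le> real (card V) - 2 * real (card {x\<in>V. f x})
     + 2 * (\<Sum>v\<in>V. if card (closed_nbhd V E v) \<le> 2 * card {x\<in>closed_nbhd V E v. f x}
                      then real (card (closed_nbhd V E v)) else 0)"
proof -
  have fin: "finite V" using G unfolding simple_graph_def by auto
  define bad where "bad v \<longleftrightarrow> card (closed_nbhd V E v) \<le> 2 * card {x\<in>closed_nbhd V E v. f x}" for v
  define R where "R = (\<Union>v\<in>{v\<in>V. bad v}. closed_nbhd V E v)"
  define g where "g x = (if f x \<and> x \<notin> R then -1 else (1::int))" for x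
  have gpm: "\<forall>x\<in>A. g x \<in> {-1,1}" for A unfolding g_def by auto
  have sdf: "signed_dom_fun V E g"
    unfolding signed_dom_fun_def
  proof (intro conjI ballI)
    fix v assume v: "v \<in> V"
    show "g v \<in> {-1,1}" unfolding g_def by auto
    note C = closed_nbhd_sub[OF G v]
    have eq: "(\<Sum>x\<in>closed_nbhd V E v. g x) = int (card (closed_nbhd V E v))
        - 2 * int (card {x\<in>closed_nbhd V E v. g x = -1})"
      by (rule sum_pm1[OF C(2) gpm])
    show "1 \<le> (\<Sum>x\<in>closed_nbhd V E v. g x)"
    proof (cases "bad v")
      case True
      hence "closed_nbhd V E v \<subseteq> R" unfolding R_def using v by auto
      hence "{x\<in>closed_nbhd V E v. g x = -1} = {}" unfolding g_def by auto
      hence "card {x\<in>closed_nbhd V E v. g x = -1} = 0" by (simp only: card.empty)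
      thus ?thesis using eq C(3) by simp
    next
      case False
      have "card {x\<in>closed_nbhd V E v. g x = -1} \<le> card {x\<in>closed_nbhd V E v. f x}"
        using C(2) by (intro card_mono) (auto simp: g_def split: if_splits)
      thus ?thesis using eq False unfolding bad_def by linarith
    qed
  qed
  have w: "(\<Sum>x\<in>V. g x) = int (card V) - 2 * int (card {x\<in>V. g x = -1})"
    by (rule sum_pm1[OF fin gpm])
  have finR: "finite R" unfolding R_def using closed_nbhd_sub[OF G] fin by auto
  have "{x\<in>V. g x = -1} = {x\<in>V. f x} - R" unfolding g_def by auto
  hence c1: "card {x\<in>V. f x} - card R \<le> card {x\<in>V. g x = -1}"
    using diff_card_le_card_Diff[OF finR] by metis
  have "card R \<le> (\<Sum>v\<in>{v\<in>V. bad v}. card (closed_nbhd V E v))"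
    unfolding R_def by (rule card_UN_le) (use fin in auto)
  also have "\<dots> = (\<Sum>v\<in>V. if bad v then card (closed_nbhd V E v) else 0)"
    using fin by (simp add: sum.inter_filter)
  finally have c2: "real (card R) \<le> (\<Sum>v\<in>V. if bad v then real (card (closed_nbhd V E v)) else 0)"
  proof -
    assume h: "card R \<le> (\<Sum>v\<in>V. if bad v then card (closed_nbhd V E v) else 0)"
    have "real (\<Sum>v\<in>V. if bad v then card (closed_nbhd V E v) else 0)
        = (\<Sum>v\<in>V. if bad v then real (card (closed_nbhd V E v)) else 0)"
      unfolding of_nat_sum by (rule sum.cong) auto
    with h show ?thesis by (metis of_nat_le_iff)
  qed
  have "real_of_int (signed_dom_number V E) \<le> real_of_int (\<Sum>x\<in>V. g x)"
    using sdn_le[OF G sdf] by linarith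
  also have "\<dots> = real (card V) - 2 * real (card {x\<in>V. g x = -1})" using w by simp
  also have "\<dots> \<le> real (card V) - 2 * real (card {x\<in>V. f x}) + 2 * real (card R)"
    using c1 by linarith
  finally show ?thesis using c2 unfolding bad_def by linarith
qed


lemma prob_bad:
  fixes V C :: "'a set" and p t :: real
  assumes fin: "finite V" and CV: "C \<subseteq> V" and Cne: "C \<noteq> {}"
    and t: "0 \<le> t" "t \<le> 1/2" and pt: "p = 1/2 - t"
  shows "measure_pmf.prob (Pi_pmf V False (\<lambda>_. bernoulli_pmf p))
           {f. card C \<le> 2 * card {x\<in>C. f x}} \<le> exp (-2 * real (card C) * t\<^sup>2)"
proof -
  let ?P = "Pi_pmf V False (\<lambda>_. bernoulli_pmf p)"
  let ?g = "\<lambda>f. card {x\<in>C. f x}"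
  define m where "m = card C"
  have finC: "finite C" using fin CV finite_subset by blast
  have m0: "0 < m" using finC Cne unfolding m_def by (simp add: card_gt_0_iff)
  have p: "p \<in> {0..1}" using t pt by auto
  have "binomial_pmf m p = map_pmf ?g (Pi_pmf C False (\<lambda>_. bernoulli_pmf p))"
    by (rule binomial_pmf_altdef'[OF finC m_def[symmetric] p])
  also have "Pi_pmf C False (\<lambda>_. bernoulli_pmf p) =
      map_pmf (\<lambda>f x. if x \<in> C then f x else False) ?P"
    by (rule Pi_pmf_subset[OF fin CV])
  also have "map_pmf ?g \<dots> = map_pmf ?g ?P"
    by (simp add: map_pmf_comp) (intro map_pmf_cong refl, meson)
  finally have bin: "map_pmf ?g ?P = binomial_pmf m p" ..
  have "{f. card C \<le> 2 * card {x\<in>C. f x}} = ?g -` {k. m \<le> 2 * k}" unfolding m_def by auto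
  hence "measure_pmf.prob ?P {f. card C \<le> 2 * card {x\<in>C. f x}}
      = measure_pmf.prob (map_pmf ?g ?P) {k. m \<le> 2 * k}" by (simp add: measure_map_pmf)
  also have "{k. m \<le> 2 * k} = {x. real m * p + real m * t \<le> real x}"
  proof -
    have e: "real m * p + real m * t = real m / 2" unfolding pt by (simp add: algebra_simps)
    have "m \<le> 2 * k \<longleftrightarrow> real m / 2 \<le> real k" for k by linarith
    thus ?thesis unfolding e by auto
  qed
  also have "measure_pmf.prob (map_pmf ?g ?P) \<dots> \<le> exp (- 2 * (real m * t)\<^sup>2 / real m)"
    unfolding bin
    by (rule binomial_distribution.prob_ge) (use p m0 t in \<open>auto simp: binomial_distribution_def\<close>)
  also have "- 2 * (real m * t)\<^sup>2 / real m = -2 * real m * t\<^sup>2"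
    using m0 by (simp add: power2_eq_square field_simps)
  finally show ?thesis unfolding m_def .
qed

lemma sdn_exp:
  fixes V :: "'a set" and p :: real and m :: "'a \<Rightarrow> nat" and B :: "'a \<Rightarrow> ('a \<Rightarrow> bool) set" and s :: real
  assumes fin: "finite V" and p: "p \<in> {0..1}"
    and le: "\<And>f. s \<le> real (card V) - 2 * real (card {x\<in>V. f x})
     + 2 * (\<Sum>v\<in>V. if f \<in> B v then real (m v) else 0)"
  shows "s \<le> real (card V) - 2 * real (card V) * p
     + 2 * (\<Sum>v\<in>V. real (m v) * measure_pmf.prob (Pi_pmf V False (\<lambda>_. bernoulli_pmf p)) (B v))"
proof -
  define P where "P = Pi_pmf V False (\<lambda>_. bernoulli_pmf p)"
  have finP: "finite (set_pmf P)" unfolding P_def using fin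
    by (subst set_Pi_pmf) (auto intro!: finite_PiE_dflt)
  note int = integrable_measure_pmf_finite[OF finP]
  have ex: "measure_pmf.expectation P (\<lambda>f. if f x then 1 else 0) = p" if x: "x \<in> V" for x
  proof -
    have "measure_pmf.expectation P (\<lambda>f. if f x then 1 else 0) =
       measure_pmf.expectation (map_pmf (\<lambda>f. f x) P) (\<lambda>b. if b then 1 else 0 :: real)"
      by simp
    also have "map_pmf (\<lambda>f. f x) P = bernoulli_pmf p" unfolding P_def
      using fin x by (simp add: Pi_pmf_component)
    finally show ?thesis using p by simp
  qed
  define h where "h f = real (card V) - 2 * (\<Sum>x\<in>V. if f x then 1 else 0)
     + 2 * (\<Sum>v\<in>V. real (m v) * indicator (B v) f)" for f
  have hle: "s \<le> h f" for f
  proof -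
    have "(\<Sum>x\<in>V. if f x then 1 else 0) = real (card {x\<in>V. f x})"
      using fin by (simp add: sum.If_cases Int_def conj_commute)
    moreover have "(\<Sum>v\<in>V. real (m v) * indicator (B v) f) = (\<Sum>v\<in>V. if f \<in> B v then real (m v) else 0)"
      by (intro sum.cong) (auto simp: indicator_def)
    ultimately show ?thesis using le[of f] unfolding h_def by simp
  qed
  have "s \<le> measure_pmf.expectation P h"
    by (rule measure_pmf.integral_ge_const[OF int]) (use hle in auto)
  also have "measure_pmf.expectation P h = real (card V) - 2 * (\<Sum>x\<in>V. measure_pmf.expectation P (\<lambda>f. if f x then 1 else 0))
     + 2 * (\<Sum>v\<in>V. real (m v) * measure_pmf.expectation P (indicator (B v)))"
    unfolding h_def by (simp add: int Bochner_Integration.integral_sum)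
  also have "(\<Sum>x\<in>V. measure_pmf.expectation P (\<lambda>f. if f x then 1 else 0)) = real (card V) * p"
    using ex by simp
  also have "(\<Sum>v\<in>V. real (m v) * measure_pmf.expectation P (indicator (B v)))
      = (\<Sum>v\<in>V. real (m v) * measure_pmf.prob P (B v))" by simp
  finally show ?thesis unfolding P_def by simp
qed

lemma xexp_mono:
  fixes a x y :: real
  assumes "0 < x" "x \<le> y" "1 \<le> a * x"
  shows "y * exp (- a * y) \<le> x * exp (- a * x)"
proof -
  have "y \<le> x * (1 + a * (y - x))"
  proof -
    have "(y - x) \<le> a * x * (y - x)" using mult_right_mono[OF assms(3), of "y - x"] assms(2) by simp
    thus ?thesis by (simp add: algebra_simps)
  qed
  also have "\<dots> \<le> x * exp (a * (y - x))"
    using assms(1) by (intro mult_left_mono) (auto simp: exp_ge_add_one_self)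
  finally have h: "y \<le> x * exp (a * (y - x))" .
  have "y * exp (- a * y) \<le> x * exp (a * (y - x)) * exp (- a * y)"
    using h by (intro mult_right_mono) auto
  also have "\<dots> = x * exp (- a * x)" by (simp add: mult.assoc exp_add[symmetric] algebra_simps)
  finally show ?thesis .
qed

lemma numeric:
  fixes d :: nat
  assumes "230 \<le> d" "d \<le> 1000"
  defines "M \<equiv> real d + 1"
  defines "t \<equiv> sqrt (ln M / M)"
  shows "0 \<le> t" "t \<le> 1/2" "1 \<le> 2 * t\<^sup>2 * M" "M * exp (- (2 * t\<^sup>2) * M) = 1 / M"
    "2 * t + 2 / M \<le> (sqrt (ln (real d + 1) * (18.16 - 1.4 * ln (real d))) + 0.25) / sqrt (real d + 1)"
proof -
  have M: "231 \<le> M" using assms(1) unfolding M_def by simp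
  have lnM0: "1 \<le> ln M"
  proof -
    have "exp 1 \<le> (3::real)" using exp_le by simp
    hence "exp 1 \<le> M" using M by simp
    thus ?thesis using M by (simp add: ln_ge_iff)
  qed
  have t2: "t\<^sup>2 = ln M / M" unfolding t_def using lnM0 M by simp
  show "0 \<le> t" unfolding t_def using lnM0 M by simp
  have sM: "8 \<le> sqrt M" using M by (simp add: real_le_rsqrt)
  have MM: "M = sqrt M * sqrt M" using M by simp
  have "ln M = 2 * ln (sqrt M)" using M by (simp add: ln_sqrt)
  also have "\<dots> \<le> 2 * sqrt M" using ln_le_minus_one[of "sqrt M"] sM M by simp
  finally have lnM: "ln M \<le> 2 * sqrt M" .
  have "8 * sqrt M \<le> sqrt M * sqrt M" using sM M by (intro mult_right_mono) auto
  hence "4 * ln M \<le> M" using lnM MM by linarith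
  hence "ln M / M \<le> (M/4) / M" using M by (intro divide_right_mono) auto
  hence "t\<^sup>2 \<le> (1/2)\<^sup>2" using t2 M by (simp add: power2_eq_square)
  thus "t \<le> 1/2" using \<open>0 \<le> t\<close> by (simp add: power_mono_iff)
  show "1 \<le> 2 * t\<^sup>2 * M" using t2 M lnM0 by simp
  have "exp (- (2 * t\<^sup>2) * M) = exp (- (ln M + ln M))" using t2 M by simp
  also have "\<dots> = inverse (exp (ln M) * exp (ln M))" by (simp only: exp_minus exp_add)
  also have "\<dots> = 1 / (M * M)" using M by (simp add: inverse_eq_divide)
  finally show "M * exp (- (2 * t\<^sup>2) * M) = 1 / M" using M by simp
  have ld: "ln (real d) \<le> 10"
  proof -
    have "ln (real d) \<le> ln (2 ^ 10)" using assms by (subst ln_le_cancel_iff) auto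
    also have "\<dots> = 10 * ln 2" by (simp only: ln_realpow)
    also have "\<dots> \<le> 10" using ln_le_minus_one[of 2] by simp
    finally show ?thesis .
  qed
  have X: "4 \<le> 18.16 - 1.4 * ln (real d)" using ld by simp
  have "sqrt (ln M * 4) \<le> sqrt (ln M * (18.16 - 1.4 * ln (real d)))"
    using X lnM0 by (intro real_sqrt_le_mono mult_left_mono) auto
  hence A: "2 * sqrt (ln M) \<le> sqrt (ln M * (18.16 - 1.4 * ln (real d)))"
    by (simp add: real_sqrt_mult)
  have B1: "2 / sqrt M \<le> 0.25" using sM M by (simp add: divide_simps)
  have "2 / M = (2 / sqrt M) / sqrt M" using MM by simp
  also have "\<dots> \<le> 0.25 / sqrt M" using B1 sM M by (intro divide_right_mono) auto
  finally have B: "2 / M \<le> 0.25 / sqrt M" .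
  have T: "t = sqrt (ln M) / sqrt M" unfolding t_def by (simp add: real_sqrt_divide)
  have "2 * t + 2 / M \<le> 2 * sqrt (ln M) / sqrt M + 0.25 / sqrt M" using T B by simp
  also have "\<dots> = (2 * sqrt (ln M) + 0.25) / sqrt M" by (simp add: add_divide_distrib)
  also have "\<dots> \<le> (sqrt (ln M * (18.16 - 1.4 * ln (real d))) + 0.25) / sqrt M"
    using A sM M by (intro divide_right_mono) auto
  finally show "2 * t + 2 / M \<le> (sqrt (ln (real d + 1) * (18.16 - 1.4 * ln (real d))) + 0.25) / sqrt (real d + 1)"
    unfolding M_def .
qed

theorem corollary3:
  fixes V :: "'a set" and E :: "'a \<Rightarrow> 'a \<Rightarrow> bool"
  assumes "simple_graph V E" and "V \<noteq> {}"
    and "230 \<le> min_degree V E" and "min_degree V E \<le> 1000"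
  shows "real_of_int (signed_dom_number V E) \<le>
    (sqrt (ln (real (min_degree V E) + 1) * (18.16 - 1.4 * ln (real (min_degree V E)))) + 0.25)
      / sqrt (real (min_degree V E) + 1) * real (card V)"
proof -
  note G = assms(1)
  have fin: "finite V" using G unfolding simple_graph_def by auto
  define d where "d = min_degree V E"
  define M where "M = real d + 1"
  define t where "t = sqrt (ln M / M)"
  define p where "p = 1/2 - t"
  define n where "n = real (card V)"
  note num = numeric[OF assms(3,4)[folded d_def], folded M_def, folded t_def]
  have p: "p \<in> {0..1}" using num(1,2) unfolding p_def by auto
  have M1: "1 \<le> M" unfolding M_def by simp
  have degv: "M \<le> real (card (closed_nbhd V E v))" if v: "v \<in> V" for v
  proof -
    have "d \<le> Defs.degree V E v" unfolding d_def min_degree_def using fin v by (intro Min_le) auto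
    thus ?thesis using closed_nbhd_sub(3)[OF G v] unfolding M_def by simp
  qed
  let ?P = "Pi_pmf V False (\<lambda>_. bernoulli_pmf p)"
  let ?B = "\<lambda>v. {f. card (closed_nbhd V E v) \<le> 2 * card {x\<in>closed_nbhd V E v. f x}}"
  have "real_of_int (signed_dom_number V E) \<le> n - 2 * n * p
     + 2 * (\<Sum>v\<in>V. real (card (closed_nbhd V E v)) * measure_pmf.prob ?P (?B v))"
    unfolding n_def
    by (rule sdn_exp[OF fin p, where m = "\<lambda>v. card (closed_nbhd V E v)" and B = ?B])
       (use sdn_comb[OF G] in simp)
  also have "(\<Sum>v\<in>V. real (card (closed_nbhd V E v)) * measure_pmf.prob ?P (?B v)) \<le> (\<Sum>v\<in>V. 1 / M)"
  proof (rule sum_mono)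
    fix v assume v: "v \<in> V"
    let ?m = "real (card (closed_nbhd V E v))"
    have ne: "closed_nbhd V E v \<noteq> {}" unfolding closed_nbhd_def by auto
    have "?m * measure_pmf.prob ?P (?B v) \<le> ?m * exp (-2 * ?m * t\<^sup>2)"
      by (intro mult_left_mono prob_bad[OF fin closed_nbhd_sub(1)[OF G v] ne num(1,2) p_def]) auto
    also have "\<dots> = ?m * exp (- (2 * t\<^sup>2) * ?m)" by (simp add: algebra_simps)
    also have "\<dots> \<le> M * exp (- (2 * t\<^sup>2) * M)"
      by (rule xexp_mono) (use M1 degv[OF v] num(3) in \<open>auto simp: algebra_simps\<close>)
    also have "\<dots> = 1 / M" by (rule num(4))
    finally show "?m * measure_pmf.prob ?P (?B v) \<le> 1 / M" .
  qed
  also have "(\<Sum>v\<in>V. 1 / M) = n / M" unfolding n_def by simp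
  finally have "real_of_int (signed_dom_number V E) \<le> (2 * t + 2 / M) * n"
    unfolding p_def by (simp add: algebra_simps)
  also have "\<dots> \<le> (sqrt (ln M * (18.16 - 1.4 * ln (real d))) + 0.25) / sqrt M * n"
    by (rule mult_right_mono[OF num(5)]) (simp add: n_def)
  finally show ?thesis unfolding d_def n_def M_def .
qed

end
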